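(* For any real numbers $t\ge1$ and $\varepsilon>0$, there exist an instance, a $t$-cohesive group $N^*$, and an allocation $A$ satisfying EJR-M such that the average satisfaction of $N^*$ with respect to $A$ is at most $\lfloor t\rfloor\cdot\left(1-\frac{\lfloor t\rfloor+1}{2t}\right)+\varepsilon$.
   Context: Model: There is a set of agents $N=\{1,\dots,n\}$. The resource $R$ consists of a cake $C=[0,c]$ for a real $c\ge 0$ and a set of indivisible goods $G=\{g_1,\dots,g_m\}$ for an integer $m\ge 0$, with $\max(c,m)>0$. A piece of cake is a union of finitely many disjoint closed subintervals of $C$; its length $\ell(\cdot)$ is the sum of the lengths of its intervals. A bundle $R'=(C',G')$ consists of a piece of cake $C'\subseteq C$ and a set $G'\subseteq G$; its size is $s(R')=\ell(C')+|G'|$. Each agent $i$ approves a bundle $R_i=(C_i,G_i)$, and her utility for a bundle $R'$ is $u_i(R')=\ell(C_i\cap C')+|G_i\cap G'|$. A parameter $\alpha\in(0,c+m]$ is given; an allocation is a bundle $A$ with $s(A)\le\alpha$. For a real $t>0$, $N^*\subseteq N$ is $t$-cohesive if $|N^*|\ge t n/\alpha$ and $s(\bigcap_{i\in N^*}R_i)\ge t$. EJR-M: an allocation $A$ satisfies EJR-M if for every real $t>0$ and every $t$-cohesive group $N^*$ for which there exists a bundle $R^*\subseteq R$ with $s(R^* )=t$ and $R^*\subseteq R_i$ for all $i\in N^*$, there is $j\in N^*$ with $u_j(A)\ge t$. The average satisfaction of a group $N'\subseteq N$ with respect to $A$ is $\frac1{|N'|}\sum_{i\in N'}u_i(A)$.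 *)

theory Defs
  imports "HOL-Analysis.Analysis"
begin

text \<open>Cake C = [0,c]; goods are {1..m} (g_k represented by k); agents are {1..n}.
A bundle is a pair (piece of cake, set of goods).\<close>

type_synonym cbundle = "real set \<times> nat set"

definition is_piece :: "real \<Rightarrow> real set \<Rightarrow> bool" where
  "is_piece c S \<longleftrightarrow> S \<subseteq> {0..c} \<and>
     (\<exists>F :: (real \<times> real) set. finite F \<and> (\<forall>(a,b)\<in>F. a \<le> b) \<and>
        (\<forall>(a,b)\<in>F. \<forall>(a',b')\<in>F. (a,b) \<noteq> (a',b') \<longrightarrow> {a..b} \<inter> {a'..b'} = {}) \<and>
        S = (\<Union>(a,b)\<in>F. {a..b}))"

definition len :: "real set \<Rightarrow> real" where
  "len S = measure lborel S"

definition is_bundle :: "real \<Rightarrow> nat \<Rightarrow> cbundle \<Rightarrow> bool" where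
  "is_bundle c m B \<longleftrightarrow> is_piece c (fst B) \<and> snd B \<subseteq> {1..m}"

definition bsize :: "cbundle \<Rightarrow> real" where
  "bsize B = len (fst B) + real (card (snd B))"

definition util :: "cbundle \<Rightarrow> cbundle \<Rightarrow> real" where
  "util Ri B = len (fst Ri \<inter> fst B) + real (card (snd Ri \<inter> snd B))"

definition bsub :: "cbundle \<Rightarrow> cbundle \<Rightarrow> bool" where
  "bsub B B' \<longleftrightarrow> fst B \<subseteq> fst B' \<and> snd B \<subseteq> snd B'"

definition binter :: "(nat \<Rightarrow> cbundle) \<Rightarrow> nat set \<Rightarrow> cbundle" where
  "binter R S = ((\<Inter>i\<in>S. fst (R i)), (\<Inter>i\<in>S. snd (R i)))"

definition valid_instance :: "nat \<Rightarrow> real \<Rightarrow> nat \<Rightarrow> (nat \<Rightarrow> cbundle) \<Rightarrow> real \<Rightarrow> bool" where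
  "valid_instance n c m R \<alpha> \<longleftrightarrow> n \<ge> 1 \<and> c \<ge> 0 \<and> max c (real m) > 0 \<and>
     (\<forall>i\<in>{1..n}. is_bundle c m (R i)) \<and> 0 < \<alpha> \<and> \<alpha> \<le> c + real m"

definition is_allocation :: "real \<Rightarrow> nat \<Rightarrow> real \<Rightarrow> cbundle \<Rightarrow> bool" where
  "is_allocation c m \<alpha> A \<longleftrightarrow> is_bundle c m A \<and> bsize A \<le> \<alpha>"

definition cohesive :: "nat \<Rightarrow> (nat \<Rightarrow> cbundle) \<Rightarrow> real \<Rightarrow> real \<Rightarrow> nat set \<Rightarrow> bool" where
  "cohesive n R \<alpha> t S \<longleftrightarrow> S \<subseteq> {1..n} \<and> real (card S) \<ge> t * real n / \<alpha> \<and> bsize (binter R S) \<ge> t"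

definition EJR_M :: "nat \<Rightarrow> real \<Rightarrow> nat \<Rightarrow> (nat \<Rightarrow> cbundle) \<Rightarrow> real \<Rightarrow> cbundle \<Rightarrow> bool" where
  "EJR_M n c m R \<alpha> A \<longleftrightarrow>
     (\<forall>t>0. \<forall>S. cohesive n R \<alpha> t S \<and>
        (\<exists>Rs. is_bundle c m Rs \<and> bsize Rs = t \<and> (\<forall>i\<in>S. bsub Rs (R i)))
        \<longrightarrow> (\<exists>j\<in>S. util (R j) A \<ge> t))"

definition avg_sat :: "(nat \<Rightarrow> cbundle) \<Rightarrow> nat set \<Rightarrow> cbundle \<Rightarrow> real" where
  "avg_sat R S A = (\<Sum>i\<in>S. util (R i) A) / real (card S)"

end

theory Submission
  imports Defs
begin

lemma gauss_real: "(\<Sum>j=1..k. real j) = real k * (real k + 1) / 2"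
  by (induction k) (auto simp: field_simps)

lemma card_swap:
  assumes "finite I" "finite J"
  shows "(\<Sum>s\<in>I. real (card {j\<in>J. P j s})) = (\<Sum>j\<in>J. real (card {s\<in>I. P j s}))"
proof -
  have a: "\<And>s. real (card {j\<in>J. P j s}) = (\<Sum>j\<in>J. if P j s then 1 else 0)"
    using assms by (simp add: sum.inter_filter[symmetric])
  have b: "\<And>j. real (card {s\<in>I. P j s}) = (\<Sum>s\<in>I. if P j s then 1 else 0)"
    using assms by (simp add: sum.inter_filter[symmetric])
  show ?thesis unfolding a b by (rule sum.swap)
qed

lemma card_bound:
  fixes t :: real and j n k :: nat
  assumes "t > 0" "real j \<le> t" "j \<ge> 1"
  shows "real (card {s\<in>{1..n}. real j * real n \<le> t * real s}) \<le> real n + 1 - real j * real n / t"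
proof -
  define a where "a = nat \<lceil>real j * real n / t\<rceil>"
  have ja: "real j * real n / t \<le> real a" unfolding a_def by linarith
  have sub: "{s\<in>{1..n}. real j * real n \<le> t * real s} \<subseteq> {a..n}"
  proof
    fix s assume "s \<in> {s\<in>{1..n}. real j * real n \<le> t * real s}"
    then have s: "s \<le> n" "real j * real n \<le> t * real s" by auto
    then have "real j * real n / t \<le> real s" using assms by (simp add: field_simps)
    then have "a \<le> s" unfolding a_def by (simp add: ceiling_le_iff nat_le_iff)
    then show "s \<in> {a..n}" using s by auto
  qed
  have c: "card {s\<in>{1..n}. real j * real n \<le> t * real s} \<le> card {a..n}"
    by (rule card_mono[OF _ sub]) simp
  have jn: "real j * real n / t \<le> real n"
  proof -
    have "real j * real n \<le> t * real n" using assms by (intro mult_right_mono) auto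
    then show ?thesis using assms by (simp add: field_simps)
  qed
  show ?thesis
  proof (cases "a \<le> n + 1")
    case True
    then have "real (card {a..n}) = real n + 1 - real a" by (simp add: of_nat_diff)
    then show ?thesis using c ja by (smt (verit) of_nat_le_iff)
  next
    case False
    then have "{a..n} = {}" by auto
    then have "card {s\<in>{1..n}. real j * real n \<le> t * real s} = 0" using c by simp
    then have r: "real (card {s\<in>{1..n}. real j * real n \<le> t * real s}) = 0" by (metis of_nat_0)
    show ?thesis using jn r by linarith
  qed
qed

lemma piece0: "is_piece 0 {}"
  unfolding is_piece_def by (intro conjI exI[of _ "{}"]) auto

theorem mainTheorem14:
  fixes t \<epsilon> :: real
  assumes "t \<ge> 1" and "\<epsilon> > 0"
  shows "\<exists>n c m R \<alpha> S A. valid_instance n c m R \<alpha> \<and> cohesive n R \<alpha> t S \<and>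
           is_allocation c m \<alpha> A \<and> EJR_M n c m R \<alpha> A \<and>
           avg_sat R S A \<le> of_int \<lfloor>t\<rfloor> * (1 - (of_int \<lfloor>t\<rfloor> + 1) / (2 * t)) + \<epsilon>"
proof -
  define k where "k = nat \<lfloor>t\<rfloor>"
  have kf: "real k = of_int \<lfloor>t\<rfloor>" unfolding k_def using assms by simp
  have kt: "real k \<le> t" "t < real k + 1" "k \<ge> 1"
  proof -
    have "1 \<le> \<lfloor>t\<rfloor>" using assms by simp
    then show "real k \<le> t" "t < real k + 1" "k \<ge> 1" using kf by (auto simp: k_def) linarith+
  qed
  define n where "n = nat \<lceil>real k / \<epsilon>\<rceil> + 1"
  have n1: "n \<ge> 1" unfolding n_def by simp
  have kn: "real k \<le> \<epsilon> * real n"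
  proof -
    have "real k / \<epsilon> \<le> real n" unfolding n_def by linarith
    then show ?thesis using assms by (simp add: field_simps)
  qed
  define G where "G s = {j\<in>{1..k}. real j * real n \<le> t * real s}" for s
  define R where "R s = ({}::real set, G s \<union> {k+1..2*k+1})" for s
  define A where "A = ({}::real set, {1..k})"
  have tpos: "t > 0" using assms by simp
  have utilR: "util (R s) A = real (card (G s))" for s
  proof -
    have "(G s \<union> {k+1..2*k+1}) \<inter> {1..k} = G s" unfolding G_def by auto
    then show ?thesis unfolding util_def R_def A_def len_def by simp
  qed
  have vi: "valid_instance n 0 (2*k+1) R t"
    unfolding valid_instance_def is_bundle_def R_def G_def using n1 piece0 kt tpos by auto
  have coh: "cohesive n R t t {1..n}"
  proof -
    have fi: "fst (binter R {1..n}) = {}" using n1 unfolding binter_def R_def by auto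
    have s1: "{k+1..2*k+1} \<subseteq> snd (binter R {1..n})" using n1 unfolding binter_def R_def by auto
    have s2: "snd (binter R {1..n}) \<subseteq> {1..2*k+1}" using n1 unfolding binter_def R_def G_def by auto
    have "card {k+1..2*k+1} \<le> card (snd (binter R {1..n}))"
      using s1 s2 by (intro card_mono) (auto intro: finite_subset)
    then have "real (k+1) \<le> real (card (snd (binter R {1..n})))" by simp
    then show ?thesis unfolding cohesive_def bsize_def fi len_def using kt tpos by simp
  qed
  have alloc: "is_allocation 0 (2*k+1) t A"
    unfolding is_allocation_def is_bundle_def A_def bsize_def len_def using piece0 kt by auto
  have ejr: "EJR_M n 0 (2*k+1) R t A"
    unfolding EJR_M_def
  proof (intro allI impI)
    fix t' S
    assume t'p: "t' > (0::real)"
    assume h: "cohesive n R t t' S \<and> (\<exists>Rs. is_bundle 0 (2*k+1) Rs \<and> bsize Rs = t' \<and> (\<forall>i\<in>S. bsub Rs (R i)))"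
    then obtain Rs where Rs: "bsize Rs = t'" "\<forall>i\<in>S. bsub Rs (R i)" by blast
    have Ssub: "S \<subseteq> {1..n}" and cS: "real (card S) \<ge> t' * real n / t"
      using h unfolding cohesive_def by auto
    have finS: "finite S" using Ssub finite_subset by blast
    have "t' * real n / t > 0" using t'p n1 tpos by simp
    then have "card S > 0" using cS by linarith
    then have Sne: "S \<noteq> {}" by auto
    then obtain i0 where "i0 \<in> S" by blast
    then have "fst Rs = {}" using Rs(2) unfolding bsub_def R_def by auto
    then have tp: "t' = real (card (snd Rs))" using Rs(1) unfolding bsize_def len_def by simp
    define p where "p = card (snd Rs)"
    define M where "M = Max S"
    have MS: "M \<in> S" unfolding M_def using finS Sne by simp
    have "S \<subseteq> {1..M}" unfolding M_def using finS Ssub by auto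
    then have cM: "card S \<le> M" using card_mono[of "{1..M}" S] by simp
    have cn: "card S \<le> n" using Ssub card_mono[of "{1..n}" S] by simp
    have pnt: "real p * real n \<le> t * real (card S)" using cS tp tpos unfolding p_def by (simp add: field_simps)
    have "real p * real n \<le> t * real n" using pnt cn tpos
      by (smt (verit) mult_left_mono of_nat_le_iff)
    then have "real p \<le> t" using n1 by simp
    then have pk: "p \<le> k" using kt by linarith
    have "{1..p} \<subseteq> G M"
    proof
      fix j assume j: "j \<in> {1..p}"
      have "real j * real n \<le> real p * real n" using j by (intro mult_right_mono) auto
      also have "\<dots> \<le> t * real (card S)" by (rule pnt)
      also have "\<dots> \<le> t * real M" using cM tpos by simp
      finally show "j \<in> G M" unfolding G_def using j pk by auto
    qed
    then have "p \<le> card (G M)" using card_mono[of "G M" "{1..p}"] unfolding G_def by simp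
    then have "util (R M) A \<ge> t'" using utilR tp unfolding p_def by simp
    then show "\<exists>j\<in>S. util (R j) A \<ge> t'" using MS by blast
  qed
  have avg: "avg_sat R {1..n} A \<le> of_int \<lfloor>t\<rfloor> * (1 - (of_int \<lfloor>t\<rfloor> + 1) / (2 * t)) + \<epsilon>"
  proof -
    have "(\<Sum>s\<in>{1..n}. util (R s) A) = (\<Sum>s\<in>{1..n}. real (card (G s)))" using utilR by simp
    also have "\<dots> = (\<Sum>j\<in>{1..k}. real (card {s\<in>{1..n}. real j * real n \<le> t * real s}))"
      unfolding G_def by (rule card_swap) auto
    also have "\<dots> \<le> (\<Sum>j\<in>{1..k}. real n + 1 - real j * real n / t)"
      by (intro sum_mono card_bound) (use tpos kt in auto)
    also have "\<dots> = real k * (real n + 1) - real n / t * (\<Sum>j=1..k. real j)"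
      by (simp add: sum_subtractf sum_divide_distrib[symmetric] sum_distrib_right[symmetric] field_simps)
    also have "\<dots> = real k * (real n + 1) - real n / t * (real k * (real k + 1) / 2)"
      by (simp only: gauss_real)
    finally have S: "(\<Sum>s\<in>{1..n}. util (R s) A) \<le> real k * (real n + 1) - real n / t * (real k * (real k + 1) / 2)" .
    have np: "real n > 0" using n1 by simp
    have "avg_sat R {1..n} A \<le> (real k * (real n + 1) - real n / t * (real k * (real k + 1) / 2)) / real n"
      unfolding avg_sat_def using S np by (simp add: divide_right_mono)
    also have "\<dots> = real k * (1 - (real k + 1) / (2 * t)) + real k / real n"
      using np tpos by (simp add: field_simps)
    also have "\<dots> \<le> real k * (1 - (real k + 1) / (2 * t)) + \<epsilon>"
      using kn np by (simp add: field_simps)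
    finally show ?thesis using kf by simp
  qed
  show ?thesis using vi coh alloc ejr avg by blast
qed

end
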